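(* Let $x\in\mathbb{R}\setminus D$. If at least one of $\limsup_n G_n'(x)$, $\liminf_n G_n'(x)$ is infinite, or if both are finite and $$\limsup_n G_n'(x)-\liminf_n G_n'(x)>2,$$ then $\partial^+T(x)=\varnothing$.
   Context: Let $\phi(x)=\operatorname{dist}(x,\mathbb{Z})$ and let $T(x)=\sum_{n=0}^\infty 2^{-n}\phi(2^nx)$ be the Takagi function. For $n\ge1$ let $D_n=\{k/2^{n-1}:k\in\mathbb{Z}\}$, $D=\bigcup_nD_n$, $g_k(x)=\operatorname{dist}(x,D_k)$, $G_n=g_1+\dots+g_n$. For $x\notin D$, $G_n'(x)$ exists and is an integer. The Fréchet superdifferential of an upper semicontinuous $f:\mathbb{R}\to\mathbb{R}$ at $x$ is $\partial^+f(x)=\{\xi\in\mathbb{R}: \limsup_{h\to0}\frac{f(x+h)-f(x)-\xi h}{|h|}\le0\}$. *)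

theory Defs
  imports "HOL-Analysis.Analysis" "HOL-Library.Extended_Real"
begin

definition phi :: "real \<Rightarrow> real" where
  "phi x = infdist x \<int>"

definition takagi :: "real \<Rightarrow> real" where
  "takagi x = (\<Sum>n. phi (2 ^ n * x) / 2 ^ n)"

text \<open>D_n = {k / 2^(n-1) : k in Z}, intended for n >= 1\<close>
definition Dn :: "nat \<Rightarrow> real set" where
  "Dn n = {real_of_int k / 2 ^ (n - 1) | k. True}"

definition Dall :: "real set" where
  "Dall = (\<Union>n\<in>{1..}. Dn n)"

definition gk :: "nat \<Rightarrow> real \<Rightarrow> real" where
  "gk k x = infdist x (Dn k)"

definition Gn :: "nat \<Rightarrow> real \<Rightarrow> real" where
  "Gn n x = (\<Sum>k=1..n. gk k x)"

definition superdiff :: "(real \<Rightarrow> real) \<Rightarrow> real \<Rightarrow> real set" where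
  "superdiff f x = {\<xi>. Limsup (at 0) (\<lambda>h. ereal ((f (x + h) - f x - \<xi> * h) / \<bar>h\<bar>)) \<le> 0}"

end

theory Submission
  imports Defs
begin


definition mf :: "real \<Rightarrow> real" where "mf t = min (frac t) (1 - frac t)"

lemma mf_bounds: "0 \<le> mf t" "mf t \<le> 1/2"
  unfolding mf_def using frac_ge_0[of t] frac_lt_1[of t] by (auto simp: min_def)

lemma infdist_lattice:
  fixes \<delta> :: real assumes d: "\<delta> > 0"
  shows "infdist y {of_int m * \<delta> | m. True} = \<delta> * mf (y / \<delta>)"
proof -
  define i where "i = floor (y/\<delta>)"
  define f where "f = y/\<delta> - i"
  have f: "0 \<le> f" "f < 1" using i_def f_def by linarith+
  have fr: "frac (y/\<delta>) = f" by (simp add: f_def i_def frac_def)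
  have yi: "y = (i + f) * \<delta>" using d f_def by (simp add: field_simps)
  let ?A = "{of_int m * \<delta> | m::int. True}"
  have up1: "infdist y ?A \<le> \<delta> * f"
    by (rule infdist_le2[of "of_int i * \<delta>"]) (use yi d f in \<open>auto simp: dist_real_def algebra_simps\<close>)
  have up2: "infdist y ?A \<le> \<delta> * (1 - f)"
    by (rule infdist_le2[of "of_int (i+1) * \<delta>"]) (use yi d f in \<open>auto simp: dist_real_def algebra_simps intro!: exI[of _ "i+1"]\<close>)
  have ne: "?A \<noteq> {}" by auto
  have ie: "infdist y ?A = Inf (dist y ` ?A)" using ne unfolding infdist_def by (simp only: if_False)
  have lo: "\<delta> * min f (1-f) \<le> infdist y ?A"
    unfolding ie
  proof (rule cINF_greatest)
    show "?A \<noteq> {}" by auto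
    fix a assume "a \<in> ?A"
    then obtain m where a: "a = of_int m * \<delta>" by auto
    show "\<delta> * min f (1-f) \<le> dist y a"
    proof (cases "m \<le> i")
      case True
      hence "real_of_int m \<le> i" by simp
      hence "\<delta> * f \<le> y - a" using a yi d by (simp add: algebra_simps mult_right_mono)
      moreover have "\<delta> * min f (1-f) \<le> \<delta> * f" by (rule mult_left_mono) (use d in auto)
      ultimately show ?thesis by (auto simp: dist_real_def)
    next
      case False
      hence "real_of_int m \<ge> i + 1" by simp
      hence "\<delta> * (i+1) \<le> \<delta> * m" using d by (intro mult_left_mono) auto
      hence "\<delta> * (1-f) \<le> a - y" using a yi d by (simp add: algebra_simps)
      moreover have "\<delta> * min f (1-f) \<le> \<delta> * (1-f)" by (rule mult_left_mono) (use d in auto)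
      ultimately show ?thesis by (auto simp: dist_real_def)
    qed
  qed
  have "infdist y ?A = \<delta> * min f (1-f)"
    using up1 up2 lo d by (auto simp: min_def)
  thus ?thesis by (simp add: mf_def fr)
qed

lemma phi_mf: "phi t = mf t"
proof -
  have "\<int> = {of_int m * (1::real) | m. True}" by (auto simp: Ints_def)
  thus ?thesis unfolding phi_def using infdist_lattice[of 1 t] by simp
qed

lemma gk_mf: "gk j y = mf (2^(j-1) * y) / 2^(j-1)"
proof -
  have "Dn j = {of_int m * (1/2^(j-1)) | m. True}" unfolding Dn_def by auto
  thus ?thesis unfolding gk_def using infdist_lattice[of "1/2^(j-1)" y] by (simp add: mult.commute)
qed

lemma Gn_mf: "Gn n y = (\<Sum>i<n. mf (2^i * y) / 2^i)"
proof -
  have "Gn n y = (\<Sum>j=1..n. mf (2^(j-1) * y) / 2^(j-1))" unfolding Gn_def by (simp add: gk_mf)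
  also have "\<dots> = (\<Sum>i<n. mf (2^i * y) / 2^i)"
    by (rule sum.reindex_bij_witness[of _ "\<lambda>i. i+1" "\<lambda>j. j-1"]) auto
  finally show ?thesis .
qed

lemma Gn_Suc: "Gn (Suc n) y = Gn n y + mf (2^n * y) / 2^n"
  by (simp add: Gn_mf)

lemma mf_half:
  fixes p :: int assumes "p/2 \<le> t" "t \<le> (p+1)/2"
  shows "mf t = (if even p then t - p/2 else (p+1)/2 - t)"
proof (cases "even p")
  case True
  then obtain i where p: "p = 2*i" by blast
  have "floor t = i" using assms p by (simp add: floor_eq_iff) 
  hence "frac t = t - i" by (simp add: frac_def)
  thus ?thesis using True p assms by (simp add: mf_def min_def)
next
  case False
  then obtain i where p: "p = 2*i+1" using oddE by blast
  show ?thesis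
  proof (cases "t < i + 1")
    case True
    have "floor t = i" using assms p True by (simp add: floor_eq_iff) 
    hence "frac t = t - i" by (simp add: frac_def)
    thus ?thesis using False p assms by (simp add: mf_def min_def)
  next
    case c: False
    hence "t = i + 1" using assms p by simp
    hence "frac t = 0" by simp
    thus ?thesis using False p \<open>t = i+1\<close> by (simp add: mf_def)
  qed
qed

lemma mf_neg: "mf (-t) = mf t"
proof (cases "t \<in> \<int>")
  case True
  hence a: "frac t = 0" by (simp add: frac_eq_0_iff)
  have b: "frac (-t) = 0" using True by (simp add: frac_neg)
  show ?thesis unfolding mf_def a b by simp
qed (auto simp: mf_def frac_neg)

lemma mf_int_minus: "mf (of_int N - t) = mf t"
proof -
  have "mf (of_int N - t) = mf (-t + of_int N)" by simp
  also have "\<dots> = mf (-t)" unfolding mf_def by (simp only: frac_add_of_int_right)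
  finally show ?thesis by (simp add: mf_neg)
qed



lemma Gn_affine:
  "\<forall>k::int. \<exists>A S. \<forall>y::real. of_int k \<le> 2^n * y \<and> 2^n * y \<le> of_int k + 1 \<longrightarrow> Gn n y = A + S * y"
proof (induction n)
  case 0
  show ?case by (auto simp: Gn_def intro!: exI[of _ 0])
next
  case (Suc n)
  show ?case
  proof
    fix k :: int
    define k2 where "k2 = k div 2"
    have kk: "k = 2 * k2 + k mod 2" "0 \<le> k mod 2" "k mod 2 \<le> 1" unfolding k2_def by auto
    obtain A S where AS: "\<And>y. of_int k2 \<le> 2^n * y \<and> 2^n * y \<le> of_int k2 + 1 \<Longrightarrow> Gn n y = A + S * y"
      using Suc.IH by blast
    define c where "c = (if even k then - of_int k / 2 else (of_int k + 1)/2) / (2::real)^n"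
    define \<sigma> where "\<sigma> = (if even k then 1 else -1::real)"
    show "\<exists>A S. \<forall>y. of_int k \<le> 2 ^ Suc n * y \<and> 2 ^ Suc n * y \<le> of_int k + 1 \<longrightarrow> Gn (Suc n) y = A + S * y"
    proof (intro exI allI impI)
      fix y :: real assume y: "of_int k \<le> 2 ^ Suc n * y \<and> 2 ^ Suc n * y \<le> of_int k + 1"
      have r1: "real_of_int k = 2 * of_int k2 + of_int (k mod 2)" using kk(1) by (metis of_int_add of_int_mult of_int_numeral)
      have r2: "0 \<le> real_of_int (k mod 2)" "real_of_int (k mod 2) \<le> 1" using kk(2,3) by simp_all
      have "of_int k2 \<le> 2^n * y \<and> 2^n * y \<le> of_int k2 + 1" using y r1 r2 by auto
      hence g: "Gn n y = A + S * y" by (rule AS)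
      have h: "mf (2^n * y) = (if even k then 2^n*y - of_int k/2 else (of_int k+1)/2 - 2^n*y)"
        using mf_half[of k "2^n*y"] y by auto
      show "Gn (Suc n) y = (A + c) + (S + \<sigma>) * y"
        unfolding Gn_Suc g h c_def \<sigma>_def by (auto simp: field_simps)
    qed
  qed
qed

lemma deriv_affine:
  assumes "open U" "x \<in> U" "\<And>y. y \<in> U \<Longrightarrow> f y = A + S * y"
  shows "deriv f x = S"
proof -
  have "((\<lambda>y. A + S*y) has_field_derivative S) (at x)" by (auto intro!: derivative_eq_intros)
  hence "(f has_field_derivative S) (at x)"
    by (rule has_field_derivative_transform_within_open[OF _ assms(1,2)]) (use assms(3) in auto)
  thus ?thesis by (rule DERIV_imp_deriv)
qed

lemma summable_mf: "summable (\<lambda>n. mf (2^n * y) / 2^n)"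
proof (rule summable_comparison_test[of _ "\<lambda>n. (1/2::real)^n"])
  show "\<exists>N. \<forall>n\<ge>N. norm (mf (2^n * y) / 2^n) \<le> (1/2)^n"
  proof (intro exI allI impI)
    fix n :: nat
    have "mf (2^n * y) \<le> 1" using mf_bounds(2)[of "2^n*y"] by linarith
    hence "mf (2^n * y) / 2^n \<le> 1 / 2^n" by (simp add: divide_right_mono)
    thus "norm (mf (2^n * y) / 2^n) \<le> (1/2)^n" using mf_bounds(1)[of "2^n*y"] by (simp add: power_one_over)
  qed
qed (rule summable_geometric, simp)

lemma takagi_split: "takagi y = Gn n y + (\<Sum>m. mf (2^(m+n) * y) / 2^(m+n))"
  unfolding takagi_def phi_mf Gn_mf
  using suminf_split_initial_segment[OF summable_mf, of y n] by simp



lemma half_to_whole: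
  fixes k :: int and y :: real
  assumes "of_int k \<le> 2^Suc n * y" "2^Suc n * y \<le> of_int k + 1"
  shows "of_int (k div 2) \<le> 2^n * y \<and> 2^n * y \<le> of_int (k div 2) + 1"
proof -
  have kk: "k = 2 * (k div 2) + k mod 2" "0 \<le> k mod 2" "k mod 2 \<le> 1" by auto
  have r1: "real_of_int k = 2 * of_int (k div 2) + of_int (k mod 2)" using kk(1) by (metis of_int_add of_int_mult of_int_numeral)
  have r2: "0 \<le> real_of_int (k mod 2)" "real_of_int (k mod 2) \<le> 1" using kk(2,3) by simp_all
  show ?thesis using assms r1 r2 by auto
qed

lemma iv_iff: "(y::real) \<in> {a/2^n<..<b/2^n} \<longleftrightarrow> a < 2^n*y \<and> 2^n*y < b"
  by (auto simp: field_simps)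

lemma nondyadic:
  assumes "x \<notin> Dall" shows "(2::real)^j * x \<notin> \<int>"
proof
  assume "2^j * x \<in> \<int>"
  then obtain m where m: "2^j * x = of_int m" by (auto elim: Ints_cases)
  hence "x = of_int m / 2^(Suc j - 1)" by (simp add: field_simps)
  hence "x \<in> Dn (Suc j)" unfolding Dn_def by blast
  hence "x \<in> Dall" unfolding Dall_def by force
  thus False using assms by simp
qed

lemma key:
  fixes x :: real
  assumes nd: "\<And>j. (2::real)^j * x \<notin> \<int>"
  shows "\<exists>x'. takagi x' - takagi x = deriv (Gn n) x * (x' - x) \<and> \<bar>x' - x\<bar> \<le> 1/2^n \<and>
    ((deriv (Gn (Suc n)) x = deriv (Gn n) x + 1 \<and> x' > x) \<or> (deriv (Gn (Suc n)) x = deriv (Gn n) x - 1 \<and> x' < x))"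
proof -
  define k' where "k' = floor (2^Suc n * x)"
  define k where "k = k' div 2"
  have t1: "of_int k' < 2^Suc n * x" 
    using nd[of "Suc n"] unfolding k'_def by (metis Ints_of_int floor_less_iff le_less of_int_floor_le)
  have t2: "2^Suc n * x < of_int k' + 1" unfolding k'_def by linarith
  have w: "of_int k \<le> 2^n * x \<and> 2^n * x \<le> of_int k + 1"
    unfolding k_def by (rule half_to_whole) (use t1 t2 in auto)
  have w1: "of_int k < 2^n * x" using w nd[of n] by (metis Ints_of_int order_le_less)
  have w2: "2^n * x < of_int k + 1" using w nd[of n] by (metis Ints_of_int of_int_1 of_int_add order_le_less)
  obtain A S where AS: "\<And>y. of_int k \<le> 2^n * y \<and> 2^n * y \<le> of_int k + 1 \<Longrightarrow> Gn n y = A + S * y"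
    using Gn_affine[of n] by blast
  have sn: "deriv (Gn n) x = S"
  proof (rule deriv_affine[of "{of_int k/2^n<..<(of_int k+1)/2^n}"])
    show "x \<in> {of_int k/2^n<..<(of_int k+1)/2^n}" unfolding iv_iff using w1 w2 by auto
    fix y :: real assume "y \<in> {of_int k/2^n<..<(of_int k+1)/2^n}"
    thus "Gn n y = A + S * y" unfolding iv_iff by (intro AS) auto
  qed simp
  define \<sigma> where "\<sigma> = (if even k' then 1 else -1::real)"
  define c where "c = (if even k' then - of_int k' / 2 else (of_int k' + 1)/2) / (2::real)^n"
  have sSn: "deriv (Gn (Suc n)) x = S + \<sigma>"
  proof (rule deriv_affine[of "{of_int k'/2^Suc n<..<(of_int k'+1)/2^Suc n}" _ _ "A + c"])
    show "x \<in> {of_int k'/2^Suc n<..<(of_int k'+1)/2^Suc n}" unfolding iv_iff using t1 t2 by auto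
    fix y :: real assume "y \<in> {of_int k'/2^Suc n<..<(of_int k'+1)/2^Suc n}"
    hence y: "of_int k' < 2^Suc n * y" "2^Suc n * y < of_int k' + 1" unfolding iv_iff by auto
    have "of_int k \<le> 2^n * y \<and> 2^n * y \<le> of_int k + 1"
      unfolding k_def by (rule half_to_whole) (use y in auto)
    hence g: "Gn n y = A + S * y" by (rule AS)
    have h: "mf (2^n * y) = (if even k' then 2^n*y - of_int k'/2 else (of_int k'+1)/2 - 2^n*y)"
      using mf_half[of k' "2^n*y"] y by auto
    show "Gn (Suc n) y = (A + c) + (S + \<sigma>) * y"
      unfolding Gn_Suc g h c_def \<sigma>_def by (auto simp: field_simps)
  qed simp
  define x' where "x' = (2 * of_int k + 1) / 2^n - x"
  have x'n: "2^n * x' = 2 * of_int k + 1 - 2^n * x" unfolding x'_def by (simp add: field_simps)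
  have gx': "Gn n x' = A + S * x'" by (rule AS) (use x'n w in auto)
  have gx: "Gn n x = A + S * x" by (rule AS) (use w in auto)
  have tail: "(\<Sum>m. mf (2^(m+n) * x') / 2^(m+n)) = (\<Sum>m. mf (2^(m+n) * x) / 2^(m+n))"
  proof (rule arg_cong[where f = suminf], rule ext)
    fix m
    have "2^(m+n) * x' = 2^m * (2^n * x')" by (simp add: power_add)
    also have "\<dots> = 2^m * (2 * of_int k + 1 - 2^n * x)" by (simp only: x'n)
    also have "\<dots> = of_int (2^m * (2*k+1)) - 2^(m+n) * x" by (simp add: power_add algebra_simps)
    finally have "2^(m+n) * x' = of_int (2^m * (2*k+1)) - 2^(m+n) * x" .
    thus "mf (2^(m+n) * x') / 2^(m+n) = mf (2^(m+n) * x) / 2^(m+n)" by (simp only: mf_int_minus)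
  qed
  have T: "takagi x' - takagi x = S * (x' - x)"
    unfolding takagi_split[of _ n] tail gx gx' by (simp add: algebra_simps)
  have d: "x' - x = (2 * of_int k + 1 - 2^Suc n * x) / 2^n" unfolding x'_def by (simp add: field_simps)
  have "\<bar>2 * of_int k + 1 - 2^Suc n * x\<bar> \<le> 1" using w by auto
  hence dist: "\<bar>x' - x\<bar> \<le> 1/2^n" unfolding d by (simp add: divide_right_mono)
  have kk: "k' = 2 * k + k' mod 2" "k' mod 2 = 0 \<or> k' mod 2 = 1" unfolding k_def by auto
  have dir: "(even k' \<and> x' > x) \<or> (odd k' \<and> x' < x)"
  proof (cases "even k'")
    case True
    hence "k' = 2*k" using kk by auto
    hence "2^Suc n * x < 2 * of_int k + 1" using t2 by simp
    hence "x' - x > 0" unfolding d by simp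
    thus ?thesis using True by simp
  next
    case False
    hence "k' = 2*k+1" using kk by auto
    hence "2^Suc n * x > 2 * of_int k + 1" using t1 by simp
    hence "x' - x < 0" unfolding d by (simp add: divide_less_0_iff)
    thus ?thesis using False by simp
  qed
  show ?thesis
    by (rule exI[of _ x']) (use T dist dir sSn sn \<sigma>_def in auto)
qed



lemma seq_bounds:
  fixes s :: "nat \<Rightarrow> real"
  assumes H: "\<forall>n\<ge>N. (s (Suc n) = s n + 1 \<and> s n < c) \<or> (s (Suc n) = s n - 1 \<and> s n > d)"
  shows "eventually (\<lambda>n. s n \<le> c + 1) sequentially" "eventually (\<lambda>n. s n \<ge> d - 1) sequentially"
proof -
  have up: "s (N + k) \<le> max (c + 1) (s N - k)" for k
  proof (induction k)
    case (Suc k)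
    have "(s (Suc (N+k)) = s (N+k) + 1 \<and> s (N+k) < c) \<or> (s (Suc (N+k)) = s (N+k) - 1 \<and> s (N+k) > d)"
      using H by simp
    then show ?case using Suc.IH by (auto simp: max_def split: if_splits)
  qed simp
  have lo: "s (N + k) \<ge> min (d - 1) (s N + k)" for k
  proof (induction k)
    case (Suc k)
    have "(s (Suc (N+k)) = s (N+k) + 1 \<and> s (N+k) < c) \<or> (s (Suc (N+k)) = s (N+k) - 1 \<and> s (N+k) > d)"
      using H by simp
    then show ?case using Suc.IH by (auto simp: min_def split: if_splits)
  qed simp
  show "eventually (\<lambda>n. s n \<le> c + 1) sequentially"
    unfolding eventually_sequentially
  proof (intro exI allI impI)
    fix n assume n: "N + nat (ceiling (s N - c - 1)) \<le> n"
    have "s (N + (n - N)) \<le> max (c + 1) (s N - (n - N))" by (rule up)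
    moreover have "real (n - N) \<ge> s N - c - 1" using n by linarith
    ultimately show "s n \<le> c + 1" using n by auto
  qed
  show "eventually (\<lambda>n. s n \<ge> d - 1) sequentially"
    unfolding eventually_sequentially
  proof (intro exI allI impI)
    fix n assume n: "N + nat (ceiling (d - 1 - s N)) \<le> n"
    have "s (N + (n - N)) \<ge> min (d - 1) (s N + (n - N))" by (rule lo)
    moreover have "real (n - N) \<ge> d - 1 - s N" using n by linarith
    ultimately show "s n \<ge> d - 1" using n by auto
  qed
qed

lemma step_prop:
  fixes x \<xi> :: real
  assumes nd: "\<And>j. (2::real)^j * x \<notin> \<int>" and xi: "\<xi> \<in> superdiff takagi x" and e: "\<epsilon> > 0"
  shows "\<exists>N. \<forall>n\<ge>N. (deriv (Gn (Suc n)) x = deriv (Gn n) x + 1 \<and> deriv (Gn n) x < \<xi> + \<epsilon>) \<or>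
                      (deriv (Gn (Suc n)) x = deriv (Gn n) x - 1 \<and> deriv (Gn n) x > \<xi> - \<epsilon>)"
proof -
  let ?q = "\<lambda>h. (takagi (x + h) - takagi x - \<xi> * h) / \<bar>h\<bar>"
  have "Limsup (at 0) (\<lambda>h. ereal (?q h)) < ereal \<epsilon>"
    using xi e unfolding superdiff_def by (auto intro: le_less_trans)
  hence "eventually (\<lambda>h. ereal (?q h) < ereal \<epsilon>) (at 0)" by (rule Limsup_lessD)
  then obtain \<delta> where dpos: "\<delta> > 0" and dH: "\<And>h. h \<noteq> 0 \<Longrightarrow> dist h 0 < \<delta> \<Longrightarrow> ?q h < \<epsilon>"
    unfolding eventually_at by auto
  obtain N where N: "(1/2::real)^N < \<delta>" using real_arch_pow_inv[OF dpos, of "1/2"] by auto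
  show ?thesis
  proof (intro exI allI impI)
    fix n assume n: "N \<le> n"
    obtain x' where x': "takagi x' - takagi x = deriv (Gn n) x * (x' - x)" "\<bar>x' - x\<bar> \<le> 1/2^n"
      "(deriv (Gn (Suc n)) x = deriv (Gn n) x + 1 \<and> x' > x) \<or> (deriv (Gn (Suc n)) x = deriv (Gn n) x - 1 \<and> x' < x)"
      using key[OF nd, of n] by blast
    define h where "h = x' - x"
    have "(1/2::real)^n \<le> (1/2)^N" using n by (intro power_decreasing) auto
    hence hd: "dist h 0 < \<delta>" using x'(2) N unfolding h_def by (simp add: power_one_over)
    have xh: "x + h = x'" unfolding h_def by simp
    show "(deriv (Gn (Suc n)) x = deriv (Gn n) x + 1 \<and> deriv (Gn n) x < \<xi> + \<epsilon>) \<or>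
          (deriv (Gn (Suc n)) x = deriv (Gn n) x - 1 \<and> deriv (Gn n) x > \<xi> - \<epsilon>)"
    proof (cases "x' > x")
      case True
      hence hp: "h > 0" unfolding h_def by simp
      have "?q h < \<epsilon>" using dH[OF _ hd] hp by simp
      hence "(deriv (Gn n) x * h - \<xi> * h) / h < \<epsilon>" using hp x'(1) unfolding xh h_def by simp
      hence "deriv (Gn n) x - \<xi> < \<epsilon>" using hp by (simp add: left_diff_distrib[symmetric])
      thus ?thesis using x'(3) True by auto
    next
      case False
      hence hp: "h < 0" using x'(3) unfolding h_def by auto
      have "?q h < \<epsilon>" using dH[OF _ hd] hp by simp
      hence "(deriv (Gn n) x * h - \<xi> * h) / (- h) < \<epsilon>" using hp x'(1) unfolding xh h_def by simp
      hence "\<xi> - deriv (Gn n) x < \<epsilon>" using hp by (simp add: left_diff_distrib[symmetric])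
      thus ?thesis using x'(3) False by auto
    qed
  qed
qed



theorem corollary2p2:
  fixes x :: real
  assumes "x \<notin> Dall"
    and "\<bar>limsup (\<lambda>n. ereal (deriv (Gn n) x))\<bar> = \<infinity>
         \<or> \<bar>liminf (\<lambda>n. ereal (deriv (Gn n) x))\<bar> = \<infinity>
         \<or> limsup (\<lambda>n. ereal (deriv (Gn n) x)) - liminf (\<lambda>n. ereal (deriv (Gn n) x)) > 2"
  shows "superdiff takagi x = {}"
proof (rule ccontr)
  assume "superdiff takagi x \<noteq> {}"
  then obtain \<xi> where xi: "\<xi> \<in> superdiff takagi x" by blast
  have nd: "\<And>j. (2::real)^j * x \<notin> \<int>" by (rule nondyadic[OF assms(1)])
  define s where "s = (\<lambda>n. deriv (Gn n) x)"
  have bnd: "limsup (\<lambda>n. ereal (s n)) \<le> ereal (\<xi> + \<epsilon> + 1) \<and> liminf (\<lambda>n. ereal (s n)) \<ge> ereal (\<xi> - \<epsilon> - 1)"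
    if e: "\<epsilon> > 0" for \<epsilon>
  proof -
    obtain N where N: "\<forall>n\<ge>N. (s (Suc n) = s n + 1 \<and> s n < \<xi> + \<epsilon>) \<or> (s (Suc n) = s n - 1 \<and> s n > \<xi> - \<epsilon>)"
      using step_prop[OF nd xi e] unfolding s_def by blast
    note ev = seq_bounds[OF N]
    have "limsup (\<lambda>n. ereal (s n)) \<le> ereal (\<xi> + \<epsilon> + 1)"
      by (rule Limsup_bounded) (use ev(1) in \<open>auto elim: eventually_mono\<close>)
    moreover have "liminf (\<lambda>n. ereal (s n)) \<ge> ereal (\<xi> - \<epsilon> - 1)"
      by (rule Liminf_bounded) (use ev(2) in \<open>auto elim: eventually_mono\<close>)
    ultimately show ?thesis by simp
  qed
  have le: "liminf (\<lambda>n. ereal (s n)) \<le> limsup (\<lambda>n. ereal (s n))" by (rule Liminf_le_Limsup) simp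
  have b1: "limsup (\<lambda>n. ereal (s n)) \<le> ereal (\<xi> + 2)" "liminf (\<lambda>n. ereal (s n)) \<ge> ereal (\<xi> - 2)"
    using bnd[of 1] by (simp_all add: add.commute)
  obtain L where L: "limsup (\<lambda>n. ereal (s n)) = ereal L"
    using b1 le by (cases "limsup (\<lambda>n. ereal (s n))") auto
  obtain l where l: "liminf (\<lambda>n. ereal (s n)) = ereal l"
    using b1 le by (cases "liminf (\<lambda>n. ereal (s n))") auto
  have "L - l > 2" using assms(2) L l unfolding s_def by auto
  define \<epsilon> where "\<epsilon> = (L - l - 2) / 4"
  have "\<epsilon> > 0" unfolding \<epsilon>_def using \<open>L - l > 2\<close> by simp
  from bnd[OF this] L l have "L \<le> \<xi> + \<epsilon> + 1" "l \<ge> \<xi> - \<epsilon> - 1" by auto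
  thus False using \<open>L - l > 2\<close> unfolding \<epsilon>_def by (simp add: field_simps)
qed

end
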